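(* Let $A$ be an algebra over a field $K$, let $A_1$ be a linear subspace with $A=A_1\oplus A_0$, and for a map $T:A\to A$ write $T=T_1+T_0$ where $T_1(A)\subseteq A_1$ and $T_0(A)\subseteq A_0$ (the components of $T$ with respect to this direct sum). Then: (i) $T$ is a weak multiplier if and only if $T_1$ is a weak multiplier; and if $T$ is a weak multiplier, then $T_1$ is $K$-linear and $T_1(A_0)=\{0\}$. (ii) If $T_1$ is a multiplier and $T_0(xy)=0$ for all $x,y\in A$, then $T$ is a multiplier. If moreover $A_1$ is a subalgebra of $A$, the converse holds: if $T$ is a multiplier then $T_1$ is a multiplier and $T_0(xy)=0$ for all $x,y\in A$. (iii) Suppose $A_1$ is a subalgebra of $A$. Let $\pi:A\to A_1$ be the projection along $A_0$ and $\mu:A_1\to A$ the inclusion, and define $\Phi:(A_1)^{A_1}\to A^A$ by $\Phi(R)=\mu\circ R\circ\pi$. Then $\Phi$ restricts to an algebra isomorphism from $M(A_1)$ onto $M_1(A)$, and to a bijective linear map from $M'(A_1)$ onto $M'_1(A)$ preserving the Jordan product $S\circ U=SU+US$ (a Jordan isomorphism).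
   Context: An algebra over $K$ is a $K$-vector space with a bilinear, not necessarily associative multiplication. A map $T:A\to A$ (not assumed linear) is a weak multiplier if $xT(y)=T(x)y$ for all $x,y\in A$, and a multiplier if $xT(y)=T(xy)=T(x)y$ for all $x,y\in A$. $M(B)$, $M'(B)$ denote the sets of multipliers and weak multipliers of an algebra $B$. $A_0=\mathrm{Ann}_l(A)\cap\mathrm{Ann}_r(A)$ with $\mathrm{Ann}_l(A)=\{a: ax=0\ \forall x\}$, $\mathrm{Ann}_r(A)=\{a: xa=0\ \forall x\}$. Given the decomposition $A=A_1\oplus A_0$, $M_1(A)$ (resp. $M'_1(A)$) is the set of multipliers (resp. weak multipliers) $T$ of $A$ with $T(A)\subseteq A_1$. *)

theory Defs
  imports Complex_Main "HOL-Library.FuncSet"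
begin

definition algebra_over :: "('k::field \<Rightarrow> 'v::ab_group_add \<Rightarrow> 'v) \<Rightarrow> ('v \<Rightarrow> 'v \<Rightarrow> 'v) \<Rightarrow> bool" where
  "algebra_over scale mult \<longleftrightarrow> vector_space scale
     \<and> (\<forall>x. Vector_Spaces.linear scale scale (mult x))
     \<and> (\<forall>y. Vector_Spaces.linear scale scale (\<lambda>x. mult x y))"

text \<open>A_0 = Ann_l(A) \<inter> Ann_r(A).\<close>
definition ann0 :: "('v::zero \<Rightarrow> 'v \<Rightarrow> 'v) \<Rightarrow> 'v set" where
  "ann0 mult = {a. (\<forall>x. mult a x = 0)} \<inter> {a. (\<forall>x. mult x a = 0)}"

definition subalgebra :: "('k::field \<Rightarrow> 'v::ab_group_add \<Rightarrow> 'v) \<Rightarrow> ('v \<Rightarrow> 'v \<Rightarrow> 'v) \<Rightarrow> 'v set \<Rightarrow> bool" where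
  "subalgebra scale mult S \<longleftrightarrow> module.subspace scale S \<and> (\<forall>x\<in>S. \<forall>y\<in>S. mult x y \<in> S)"

text \<open>Weak multipliers / multipliers of the algebra B (a subset of the ambient space,
  closed under mult), for a map T (only its values on B matter).\<close>
definition weak_multiplier :: "('v \<Rightarrow> 'v \<Rightarrow> 'v) \<Rightarrow> 'v set \<Rightarrow> ('v \<Rightarrow> 'v) \<Rightarrow> bool" where
  "weak_multiplier mult B T \<longleftrightarrow> (\<forall>x\<in>B. \<forall>y\<in>B. mult x (T y) = mult (T x) y)"

definition multiplier :: "('v \<Rightarrow> 'v \<Rightarrow> 'v) \<Rightarrow> 'v set \<Rightarrow> ('v \<Rightarrow> 'v) \<Rightarrow> bool" where
  "multiplier mult B T \<longleftrightarrow> (\<forall>x\<in>B. \<forall>y\<in>B. mult x (T y) = T (mult x y) \<and> T (mult x y) = mult (T x) y)"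

text \<open>M(B) and M'(B): maps B \<rightarrow> B (represented extensionally) that are (weak) multipliers.
  For B = UNIV these are all maps A \<rightarrow> A.\<close>
definition Mults :: "('v \<Rightarrow> 'v \<Rightarrow> 'v) \<Rightarrow> 'v set \<Rightarrow> ('v \<Rightarrow> 'v) set" where
  "Mults mult B = {T \<in> B \<rightarrow>\<^sub>E B. multiplier mult B T}"

definition WMults :: "('v \<Rightarrow> 'v \<Rightarrow> 'v) \<Rightarrow> 'v set \<Rightarrow> ('v \<Rightarrow> 'v) set" where
  "WMults mult B = {T \<in> B \<rightarrow>\<^sub>E B. weak_multiplier mult B T}"

definition Mults1 :: "('v \<Rightarrow> 'v \<Rightarrow> 'v) \<Rightarrow> 'v set \<Rightarrow> ('v \<Rightarrow> 'v) set" where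
  "Mults1 mult A1 = {T \<in> Mults mult UNIV. range T \<subseteq> A1}"

definition WMults1 :: "('v \<Rightarrow> 'v \<Rightarrow> 'v) \<Rightarrow> 'v set \<Rightarrow> ('v \<Rightarrow> 'v) set" where
  "WMults1 mult A1 = {T \<in> WMults mult UNIV. range T \<subseteq> A1}"

definition proj_along :: "'v::ab_group_add set \<Rightarrow> 'v set \<Rightarrow> 'v \<Rightarrow> 'v" where
  "proj_along A1 A0 x = (THE a. a \<in> A1 \<and> x - a \<in> A0)"

definition fadd :: "'v set \<Rightarrow> ('v \<Rightarrow> 'v::plus) \<Rightarrow> ('v \<Rightarrow> 'v) \<Rightarrow> ('v \<Rightarrow> 'v)" where
  "fadd B R S = restrict (\<lambda>x. R x + S x) B"

definition fscale :: "('k \<Rightarrow> 'v \<Rightarrow> 'v) \<Rightarrow> 'v set \<Rightarrow> 'k \<Rightarrow> ('v \<Rightarrow> 'v) \<Rightarrow> ('v \<Rightarrow> 'v)" where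
  "fscale scale B c R = restrict (\<lambda>x. scale c (R x)) B"

definition jordan :: "'v set \<Rightarrow> ('v \<Rightarrow> 'v::plus) \<Rightarrow> ('v \<Rightarrow> 'v) \<Rightarrow> ('v \<Rightarrow> 'v)" where
  "jordan B S U = fadd B (compose B S U) (compose B U S)"

end

theory Submission
  imports Defs
begin

locale dsA =
  fixes scale :: "'k::field \<Rightarrow> 'v::ab_group_add \<Rightarrow> 'v" and mult :: "'v \<Rightarrow> 'v \<Rightarrow> 'v" and A1 :: "'v set"
  assumes alg: "algebra_over scale mult"
    and sub: "module.subspace scale A1"
    and dsum_int: "A1 \<inter> ann0 mult = {0}"
    and dsum_span: "\<forall>x. \<exists>a\<in>A1. \<exists>b\<in>ann0 mult. x = a + b"
begin

lemma vs: "vector_space scale" using alg unfolding algebra_over_def by auto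

lemma add1: "mult x (y + z) = mult x y + mult x z"
  and sc1: "mult x (scale c y) = scale c (mult x y)"
  and add2: "mult (y + z) x = mult y x + mult z x"
  and sc2: "mult (scale c y) x = scale c (mult y x)"
proof -
  have l1: "Vector_Spaces.linear scale scale (mult x)" for x using alg unfolding algebra_over_def by auto
  have l2: "Vector_Spaces.linear scale scale (\<lambda>x. mult x y)" for y using alg unfolding algebra_over_def by auto
  show "mult x (y + z) = mult x y + mult x z" using l1[of x] unfolding Vector_Spaces.linear_iff by blast
  show "mult x (scale c y) = scale c (mult x y)" using l1[of x] unfolding Vector_Spaces.linear_iff by blast
  show "mult (y + z) x = mult y x + mult z x" using l2[of x] unfolding Vector_Spaces.linear_iff by blast
  show "mult (scale c y) x = scale c (mult y x)" using l2[of x] unfolding Vector_Spaces.linear_iff by blast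
qed

lemma zero1[simp]: "mult x 0 = 0"
  using add1[of x 0 0] by simp
lemma zero2[simp]: "mult 0 x = 0"
  using add2[of 0 0 x] by simp
lemma diff1: "mult x (y - z) = mult x y - mult x z"
  using add1[of x "y - z" z] by (simp add: algebra_simps)
lemma diff2: "mult (y - z) x = mult y x - mult z x"
  using add2[of "y - z" z x] by (simp add: algebra_simps)

lemma modl: "module scale" using vs module_iff_vector_space by blast

lemma A1_0: "0 \<in> A1" and A1_add: "a \<in> A1 \<Longrightarrow> b \<in> A1 \<Longrightarrow> a + b \<in> A1"
  and A1_scale: "a \<in> A1 \<Longrightarrow> scale c a \<in> A1"
  using sub unfolding module.subspace_def[OF modl] by auto

lemma A1_diff: "a \<in> A1 \<Longrightarrow> b \<in> A1 \<Longrightarrow> a - b \<in> A1"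
  using module.subspace_diff[OF modl sub] by blast

lemma A0_char: "z \<in> ann0 mult \<longleftrightarrow> (\<forall>x. mult z x = 0) \<and> (\<forall>x. mult x z = 0)"
  unfolding ann0_def by auto

lemma A0_0: "0 \<in> ann0 mult" by (simp add: A0_char)

lemma A0_diff: "a \<in> ann0 mult \<Longrightarrow> b \<in> ann0 mult \<Longrightarrow> a - b \<in> ann0 mult"
  by (simp add: A0_char diff1 diff2)

lemma both0: "z \<in> A1 \<Longrightarrow> (\<And>x. mult z x = 0) \<Longrightarrow> (\<And>x. mult x z = 0) \<Longrightarrow> z = 0"
  using dsum_int by (auto simp: A0_char)

lemma proj_ex: "\<exists>a. a \<in> A1 \<and> x - a \<in> ann0 mult"
  using dsum_span by (metis add_diff_cancel_left')

lemma proj_uniq: "a \<in> A1 \<Longrightarrow> x - a \<in> ann0 mult \<Longrightarrow> a' \<in> A1 \<Longrightarrow> x - a' \<in> ann0 mult \<Longrightarrow> a = a'"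
proof -
  assume h: "a \<in> A1" "x - a \<in> ann0 mult" "a' \<in> A1" "x - a' \<in> ann0 mult"
  have "a - a' \<in> A1" using h A1_diff by auto
  moreover have "(x - a') - (x - a) \<in> ann0 mult" using A0_diff[OF h(4) h(2)] .
  moreover have "(x - a') - (x - a) = a - a'" by simp
  ultimately have "a - a' \<in> A1 \<inter> ann0 mult" by simp
  hence "a - a' = 0" using dsum_int by blast
  thus ?thesis by simp
qed

definition "pr x = proj_along A1 (ann0 mult) x"

lemma pr: "pr x \<in> A1" "x - pr x \<in> ann0 mult"
proof -
  obtain a where a: "a \<in> A1" "x - a \<in> ann0 mult" using proj_ex by blast
  have "pr x = a" unfolding pr_def proj_along_def
    by (rule the_equality) (use a proj_uniq in auto)
  thus "pr x \<in> A1" "x - pr x \<in> ann0 mult" using a by auto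
qed

lemma pr_id: "a \<in> A1 \<Longrightarrow> pr a = a"
  using pr proj_uniq[of a a "pr a"] A0_0 by auto

lemma mult_pr1: "mult x y = mult (pr x) y"
proof -
  have "mult x y = mult (pr x) y + mult (x - pr x) y" by (simp add: add2[symmetric])
  thus ?thesis using pr(2)[of x] by (simp add: A0_char)
qed
lemma mult_pr2: "mult x y = mult x (pr y)"
proof -
  have "mult x y = mult x (pr y) + mult x (y - pr y)" by (simp add: add1[symmetric])
  thus ?thesis using pr(2)[of y] by (simp add: A0_char)
qed

lemma weak_lin:
  assumes w: "weak_multiplier mult UNIV T1" and r: "range T1 \<subseteq> A1"
  shows "Vector_Spaces.linear scale scale T1 \<and> T1 ` ann0 mult = {0}"
proof -
  have w': "\<And>x y. mult x (T1 y) = mult (T1 x) y" using w unfolding weak_multiplier_def by auto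
  have T1A: "\<And>x. T1 x \<in> A1" using r by auto
  have a: "T1 (y + z) = T1 y + T1 z" for y z
  proof -
    have "T1 (y + z) - (T1 y + T1 z) = 0"
    proof (rule both0)
      show "T1 (y + z) - (T1 y + T1 z) \<in> A1" using T1A A1_add A1_diff by auto
      show "mult (T1 (y + z) - (T1 y + T1 z)) x = 0" for x
        by (simp add: diff2 add2 w'[symmetric] add1)
      show "mult x (T1 (y + z) - (T1 y + T1 z)) = 0" for x
        by (simp add: diff1 add1 w' add2)
    qed
    thus ?thesis by simp
  qed
  have s: "T1 (scale c y) = scale c (T1 y)" for c y
  proof -
    have "T1 (scale c y) - scale c (T1 y) = 0"
    proof (rule both0)
      show "T1 (scale c y) - scale c (T1 y) \<in> A1" using T1A A1_scale A1_diff by auto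
      show "mult (T1 (scale c y) - scale c (T1 y)) x = 0" for x
        by (simp add: diff2 sc2 w'[symmetric] sc1)
      show "mult x (T1 (scale c y) - scale c (T1 y)) = 0" for x
        by (simp add: diff1 sc1 w' sc2)
    qed
    thus ?thesis by simp
  qed
  have z: "T1 b = 0" if "b \<in> ann0 mult" for b
  proof (rule both0)
    show "T1 b \<in> A1" by (rule T1A)
    show "mult (T1 b) x = 0" for x using that by (simp add: w'[symmetric] A0_char)
    show "mult x (T1 b) = 0" for x using that by (simp add: w' A0_char)
  qed
  show ?thesis using a s z vs A0_0 unfolding Vector_Spaces.linear_iff by auto
qed

lemma weak_pr: "weak_multiplier mult UNIV T1 \<Longrightarrow> range T1 \<subseteq> A1 \<Longrightarrow> T1 (pr x) = T1 x"
proof -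
  assume w: "weak_multiplier mult UNIV T1" "range T1 \<subseteq> A1"
  from weak_lin[OF w] have l: "\<And>x y. T1 (x + y) = T1 x + T1 y" and z: "T1 (x - pr x) = 0"
    using pr(2) unfolding Vector_Spaces.linear_iff by auto
  have "T1 x = T1 (pr x + (x - pr x))" by simp
  also have "\<dots> = T1 (pr x)" using l[of "pr x" "x - pr x"] z by simp
  finally show ?thesis by simp
qed


lemma part_i:
  assumes T_split: "\<forall>x. T x = T1 x + T0 x"
    and T1_range: "range T1 \<subseteq> A1"
    and T0_range: "range T0 \<subseteq> ann0 mult"
  shows "(weak_multiplier mult UNIV T \<longleftrightarrow> weak_multiplier mult UNIV T1)"
    "(weak_multiplier mult UNIV T \<longrightarrow>
          Vector_Spaces.linear scale scale T1 \<and> T1 ` ann0 mult = {0})"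
    "(multiplier mult UNIV T1 \<and> (\<forall>x y. T0 (mult x y) = 0) \<longrightarrow> multiplier mult UNIV T)"
    "(subalgebra scale mult A1 \<longrightarrow> multiplier mult UNIV T \<longrightarrow>
          multiplier mult UNIV T1 \<and> (\<forall>x y. T0 (mult x y) = 0))"
proof -
  have T0A: "\<And>x. T0 x \<in> ann0 mult" using T0_range by auto
  have T1A: "\<And>x. T1 x \<in> A1" using T1_range by auto
  have l: "mult x (T y) = mult x (T1 y)" for x y using T0A[of y] T_split by (simp add: add1 A0_char)
  have r: "mult (T x) y = mult (T1 x) y" for x y using T0A[of x] T_split by (simp add: add2 A0_char)
  show i1: "(weak_multiplier mult UNIV T \<longleftrightarrow> weak_multiplier mult UNIV T1)"
    unfolding weak_multiplier_def using l r by simp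
  show "(weak_multiplier mult UNIV T \<longrightarrow>
          Vector_Spaces.linear scale scale T1 \<and> T1 ` ann0 mult = {0})"
    using i1 weak_lin T1_range by blast
  show "(multiplier mult UNIV T1 \<and> (\<forall>x y. T0 (mult x y) = 0) \<longrightarrow> multiplier mult UNIV T)"
    unfolding multiplier_def using l r T_split by simp
  show "(subalgebra scale mult A1 \<longrightarrow> multiplier mult UNIV T \<longrightarrow>
          multiplier mult UNIV T1 \<and> (\<forall>x y. T0 (mult x y) = 0))"
  proof (intro impI)
    assume sa: "subalgebra scale mult A1" and m: "multiplier mult UNIV T"
    have m': "\<And>x y. mult x (T y) = T (mult x y)" "\<And>x y. T (mult x y) = mult (T x) y"
      using m unfolding multiplier_def by auto
    have TA: "T (mult x y) \<in> A1" for x y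
    proof -
      have "T (mult x y) = mult (pr x) (T1 y)" using m'(1) l mult_pr1 by metis
      thus ?thesis using sa pr(1) T1A unfolding subalgebra_def by auto
    qed
    have z: "T0 (mult x y) = 0" for x y
    proof -
      have "T0 (mult x y) = T (mult x y) - T1 (mult x y)" using T_split by simp
      hence "T0 (mult x y) \<in> A1" using TA T1A A1_diff by metis
      thus ?thesis using T0A[of "mult x y"] dsum_int by blast
    qed
    show "multiplier mult UNIV T1 \<and> (\<forall>x y. T0 (mult x y) = 0)"
      unfolding multiplier_def using z m' l r T_split by (metis add.right_neutral)
  qed
qed

lemma part_iii:
  assumes sa: "subalgebra scale mult A1"
    and Phi_def: "\<Phi> = (\<lambda>R x. R (proj_along A1 (ann0 mult) x))"
  shows
          "bij_betw \<Phi> (Mults mult A1) (Mults1 mult A1)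
          \<and> (\<forall>R\<in>Mults mult A1. \<forall>S\<in>Mults mult A1.
               \<Phi> (fadd A1 R S) = (\<lambda>x. \<Phi> R x + \<Phi> S x)
               \<and> \<Phi> (compose A1 R S) = \<Phi> R \<circ> \<Phi> S)
          \<and> (\<forall>R\<in>Mults mult A1. \<forall>c. \<Phi> (fscale scale A1 c R) = (\<lambda>x. scale c (\<Phi> R x)))
          \<and> bij_betw \<Phi> (WMults mult A1) (WMults1 mult A1)
          \<and> (\<forall>R\<in>WMults mult A1. \<forall>S\<in>WMults mult A1.
               \<Phi> (fadd A1 R S) = (\<lambda>x. \<Phi> R x + \<Phi> S x)
               \<and> \<Phi> (jordan A1 R S) = (\<lambda>x. \<Phi> R (\<Phi> S x) + \<Phi> S (\<Phi> R x)))
          \<and> (\<forall>R\<in>WMults mult A1. \<forall>c. \<Phi> (fscale scale A1 c R) = (\<lambda>x. scale c (\<Phi> R x)))"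
proof -
  have P: "\<Phi> R = (\<lambda>x. R (pr x))" for R unfolding Phi_def pr_def by simp
  have closed: "mult a b \<in> A1" if "a \<in> A1" "b \<in> A1" for a b using sa that unfolding subalgebra_def by auto
  have prm: "pr (mult x y) = mult (pr x) (pr y)" for x y
    using pr_id[OF closed[OF pr(1) pr(1)]] mult_pr1 mult_pr2 by metis
  have inj: "inj_on \<Phi> (A1 \<rightarrow>\<^sub>E A1)"
  proof (rule inj_onI)
    fix R S assume R: "R \<in> A1 \<rightarrow>\<^sub>E A1" and S: "S \<in> A1 \<rightarrow>\<^sub>E A1" and e: "\<Phi> R = \<Phi> S"
    show "R = S"
    proof (rule ext)
      fix a show "R a = S a"
      proof (cases "a \<in> A1")
        case True thus ?thesis using fun_cong[OF e, of a] by (simp add: P pr_id)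
      next
        case False thus ?thesis using PiE_arb[OF R False] PiE_arb[OF S False] by simp
      qed
    qed
  qed
  have rng: "range (\<Phi> R) \<subseteq> A1" if "R \<in> A1 \<rightarrow>\<^sub>E A1" for R using that pr(1) by (auto simp: P)
  have Mw: "Mults mult A1 \<subseteq> A1 \<rightarrow>\<^sub>E A1" "WMults mult A1 \<subseteq> A1 \<rightarrow>\<^sub>E A1"
    unfolding Mults_def WMults_def by auto
  have surj: "\<exists>R\<in>A1 \<rightarrow>\<^sub>E A1. T = \<Phi> R \<and> R = restrict T A1"
    if w: "weak_multiplier mult UNIV T" and r: "range T \<subseteq> A1" for T
  proof (intro bexI conjI)
    show "restrict T A1 \<in> A1 \<rightarrow>\<^sub>E A1" using r by auto
    show "T = \<Phi> (restrict T A1)" using weak_pr[OF w r] pr(1) by (auto simp: P)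
  qed simp
  have b1: "bij_betw \<Phi> (Mults mult A1) (Mults1 mult A1)"
  proof (rule bij_betw_imageI)
    show "inj_on \<Phi> (Mults mult A1)" using inj Mw inj_on_subset by blast
    show "\<Phi> ` Mults mult A1 = Mults1 mult A1"
    proof
      show "\<Phi> ` Mults mult A1 \<subseteq> Mults1 mult A1"
      proof
        fix T assume "T \<in> \<Phi> ` Mults mult A1"
        then obtain R where R: "R \<in> Mults mult A1" and T: "T = \<Phi> R" by auto
        have RA: "\<And>a. a \<in> A1 \<Longrightarrow> R a \<in> A1" using R unfolding Mults_def by auto
        have m: "\<And>a b. a \<in> A1 \<Longrightarrow> b \<in> A1 \<Longrightarrow> mult a (R b) = R (mult a b) \<and> R (mult a b) = mult (R a) b"
          using R unfolding Mults_def multiplier_def by auto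
        have "multiplier mult UNIV T" unfolding multiplier_def T P
        proof (intro ballI conjI)
          fix x y :: 'v
          show "mult x (R (pr y)) = R (pr (mult x y))"
            using m[OF pr(1) pr(1), of x y] mult_pr1[of x "R (pr y)"] prm by metis
          show "R (pr (mult x y)) = mult (R (pr x)) y"
            using m[OF pr(1) pr(1), of x y] mult_pr2[of "R (pr x)" y] prm by metis
        qed
        thus "T \<in> Mults1 mult A1" using rng[of R] R Mw T unfolding Mults1_def Mults_def by auto
      qed
      show "Mults1 mult A1 \<subseteq> \<Phi> ` Mults mult A1"
      proof
        fix T assume T: "T \<in> Mults1 mult A1"
        hence m: "multiplier mult UNIV T" and r: "range T \<subseteq> A1" unfolding Mults1_def Mults_def by auto
        hence w: "weak_multiplier mult UNIV T" unfolding multiplier_def weak_multiplier_def by auto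
        obtain R where R: "R \<in> A1 \<rightarrow>\<^sub>E A1" "T = \<Phi> R" "R = restrict T A1" using surj[OF w r] by blast
        have "multiplier mult A1 R" using m R(3) closed unfolding multiplier_def by auto
        hence "R \<in> Mults mult A1" using R(1) unfolding Mults_def by blast
        thus "T \<in> \<Phi> ` Mults mult A1" using R(2) by blast
      qed
    qed
  qed
  have b2: "bij_betw \<Phi> (WMults mult A1) (WMults1 mult A1)"
  proof (rule bij_betw_imageI)
    show "inj_on \<Phi> (WMults mult A1)" using inj Mw inj_on_subset by blast
    show "\<Phi> ` WMults mult A1 = WMults1 mult A1"
    proof
      show "\<Phi> ` WMults mult A1 \<subseteq> WMults1 mult A1"
      proof
        fix T assume "T \<in> \<Phi> ` WMults mult A1"
        then obtain R where R: "R \<in> WMults mult A1" and T: "T = \<Phi> R" by auto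
        have m: "\<And>a b. a \<in> A1 \<Longrightarrow> b \<in> A1 \<Longrightarrow> mult a (R b) = mult (R a) b"
          using R unfolding WMults_def weak_multiplier_def by auto
        have "weak_multiplier mult UNIV T" unfolding weak_multiplier_def T P
        proof (intro ballI)
          fix x y :: 'v
          show "mult x (R (pr y)) = mult (R (pr x)) y"
            using m[OF pr(1) pr(1), of x y] mult_pr1[of x "R (pr y)"] mult_pr2[of "R (pr x)" y] by metis
        qed
        thus "T \<in> WMults1 mult A1" using rng[of R] R Mw T unfolding WMults1_def WMults_def by auto
      qed
      show "WMults1 mult A1 \<subseteq> \<Phi> ` WMults mult A1"
      proof
        fix T assume T: "T \<in> WMults1 mult A1"
        hence w: "weak_multiplier mult UNIV T" and r: "range T \<subseteq> A1" unfolding WMults1_def WMults_def by auto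
        obtain R where R: "R \<in> A1 \<rightarrow>\<^sub>E A1" "T = \<Phi> R" "R = restrict T A1" using surj[OF w r] by blast
        have "weak_multiplier mult A1 R" using w R(3) unfolding weak_multiplier_def by auto
        hence "R \<in> WMults mult A1" using R(1) unfolding WMults_def by blast
        thus "T \<in> \<Phi> ` WMults mult A1" using R(2) by blast
      qed
    qed
  qed
  have ops: "\<Phi> (fadd A1 R S) = (\<lambda>x. \<Phi> R x + \<Phi> S x)
       \<and> \<Phi> (compose A1 R S) = \<Phi> R \<circ> \<Phi> S
       \<and> \<Phi> (jordan A1 R S) = (\<lambda>x. \<Phi> R (\<Phi> S x) + \<Phi> S (\<Phi> R x))
       \<and> \<Phi> (fscale scale A1 c R) = (\<lambda>x. scale c (\<Phi> R x))"
    if R: "R \<in> A1 \<rightarrow>\<^sub>E A1" and S: "S \<in> A1 \<rightarrow>\<^sub>E A1" for R S c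
  proof -
    have RA: "R (pr x) \<in> A1" "S (pr x) \<in> A1" for x using R S pr(1) by auto
    show ?thesis using pr(1) RA
      by (auto simp: P fadd_def fscale_def jordan_def compose_def pr_id)
  qed
  show ?thesis using b1 b2 ops Mw by blast
qed

end

theorem theorem3p1:
  fixes scale :: "'k::field \<Rightarrow> 'v::ab_group_add \<Rightarrow> 'v"
    and mult :: "'v \<Rightarrow> 'v \<Rightarrow> 'v"
    and A1 :: "'v set"
    and T T1 T0 :: "'v \<Rightarrow> 'v"
    and \<Phi> :: "('v \<Rightarrow> 'v) \<Rightarrow> ('v \<Rightarrow> 'v)"
  assumes alg: "algebra_over scale mult"
    and sub: "module.subspace scale A1"
    and dsum_int: "A1 \<inter> ann0 mult = {0}"
    and dsum_span: "\<forall>x. \<exists>a\<in>A1. \<exists>b\<in>ann0 mult. x = a + b"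
    and T_split: "\<forall>x. T x = T1 x + T0 x"
    and T1_range: "range T1 \<subseteq> A1"
    and T0_range: "range T0 \<subseteq> ann0 mult"
    and Phi_def: "\<Phi> = (\<lambda>R x. R (proj_along A1 (ann0 mult) x))"
  shows
    "(weak_multiplier mult UNIV T \<longleftrightarrow> weak_multiplier mult UNIV T1)
     \<and> (weak_multiplier mult UNIV T \<longrightarrow>
          Vector_Spaces.linear scale scale T1 \<and> T1 ` ann0 mult = {0})
     \<and> (multiplier mult UNIV T1 \<and> (\<forall>x y. T0 (mult x y) = 0) \<longrightarrow> multiplier mult UNIV T)
     \<and> (subalgebra scale mult A1 \<longrightarrow> multiplier mult UNIV T \<longrightarrow>
          multiplier mult UNIV T1 \<and> (\<forall>x y. T0 (mult x y) = 0))
     \<and> (subalgebra scale mult A1 \<longrightarrow>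
          bij_betw \<Phi> (Mults mult A1) (Mults1 mult A1)
          \<and> (\<forall>R\<in>Mults mult A1. \<forall>S\<in>Mults mult A1.
               \<Phi> (fadd A1 R S) = (\<lambda>x. \<Phi> R x + \<Phi> S x)
               \<and> \<Phi> (compose A1 R S) = \<Phi> R \<circ> \<Phi> S)
          \<and> (\<forall>R\<in>Mults mult A1. \<forall>c. \<Phi> (fscale scale A1 c R) = (\<lambda>x. scale c (\<Phi> R x)))
          \<and> bij_betw \<Phi> (WMults mult A1) (WMults1 mult A1)
          \<and> (\<forall>R\<in>WMults mult A1. \<forall>S\<in>WMults mult A1.
               \<Phi> (fadd A1 R S) = (\<lambda>x. \<Phi> R x + \<Phi> S x)
               \<and> \<Phi> (jordan A1 R S) = (\<lambda>x. \<Phi> R (\<Phi> S x) + \<Phi> S (\<Phi> R x)))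
          \<and> (\<forall>R\<in>WMults mult A1. \<forall>c. \<Phi> (fscale scale A1 c R) = (\<lambda>x. scale c (\<Phi> R x))))"
proof -
  interpret dsA scale mult A1 using alg sub dsum_int dsum_span by unfold_locales
  note I = part_i[OF T_split T1_range T0_range]
  note III = part_iii[OF _ Phi_def]
  show ?thesis using I III by blast
qed

end
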